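(* Let $S_n^0$ be the set of elements of $S_n$ all of whose coordinates are nonzero (i.e. $S_n^0=\{s\in\{-1,1\}^n: s_1=1\}$). Then $S_n^0$ is a minimal element (with respect to inclusion) of the poset $\mathcal{E}_n=\{X\subseteq S_n:\mathrm{Elim}(X)=S_n\}$; that is, $\mathrm{Elim}(S_n^0)=S_n$ and $\mathrm{Elim}(Y)\neq S_n$ for every proper subset $Y\subsetneq S_n^0$.
   Context: $S_n$ is the set of all nonzero $n$-tuples in $\{-1,0,1\}^n$ whose first nonzero entry equals $1$. A tuple $t=(t_1,\dots,t_n)\in\{1,0,-1,u\}^n$ ($u$ a formal symbol) eliminates $s\in S_n$ if: (i) $t_i\neq0$ and $s_i\neq0$ for some $i$; (ii) there is $k\in\{+1,-1\}$ with $t_i=ks_i$ for all $i$ with $s_i\neq0$ and $t_i\neq0$; (iii) $s_i=0$ whenever $t_i=u$. For $X\subseteq S_n$, $\mathrm{Elim}(X)$ is the set of elements of $S_n$ eliminated by at least one element of $X$. *)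

theory Defs
  imports Main
begin

text \<open>n-tuples are lists of length n. Entries of a tuple t in {1,0,-1,u}^n are
  represented as int option: Some c for c in {1,0,-1}, None for the formal symbol u.\<close>

definition S :: "nat \<Rightarrow> int list set" where
  "S n = {s. length s = n \<and> set s \<subseteq> {-1, 0, 1} \<and>
             (\<exists>i<n. s ! i = 1 \<and> (\<forall>j<i. s ! j = 0))}"

definition S0 :: "nat \<Rightarrow> int list set" where
  "S0 n = {s \<in> S n. \<forall>i<n. s ! i \<noteq> 0}"

definition eliminates :: "int option list \<Rightarrow> int list \<Rightarrow> bool" where
  "eliminates t s \<longleftrightarrow> length t = length s \<and>
     (\<exists>i<length s. t ! i \<noteq> Some 0 \<and> s ! i \<noteq> 0) \<and>
     (\<exists>k\<in>{1, -1::int}. \<forall>i<length s. t ! i \<noteq> Some 0 \<and> s ! i \<noteq> 0 \<longrightarrow> t ! i = Some (k * s ! i)) \<and>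
     (\<forall>i<length s. t ! i = None \<longrightarrow> s ! i = 0)"

definition Elim :: "nat \<Rightarrow> int list set \<Rightarrow> int list set" where
  "Elim n X = {s \<in> S n. \<exists>t\<in>X. eliminates (map Some t) s}"

end

theory Submission
  imports Defs
begin

lemma S_first: assumes "s \<in> S n" "s ! 0 \<noteq> 0" shows "s ! 0 = 1"
proof -
  from assms(1) obtain i where i: "i < n" "s ! i = 1" "\<forall>j<i. s ! j = 0" unfolding S_def by auto
  have "i = 0" using i(3) assms(2) by (cases i) auto
  thus ?thesis using i by simp
qed

lemma S_pos: assumes "s \<in> S n" shows "0 < n" "length s = n" "set s \<subseteq> {-1,0,1}"
  using assms unfolding S_def by auto

lemma elim_all: assumes "s \<in> S n" shows "s \<in> Elim n (S0 n)"
proof -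
  define t where "t = map (\<lambda>x. if x = 0 then 1 else x) s"
  have n: "0 < n" "length s = n" "set s \<subseteq> {-1,0,1}" using S_pos[OF assms] by auto
  have lt: "length t = n" using n t_def by simp
  have t0: "t ! 0 = 1" using S_first[OF assms] n unfolding t_def by auto
  have tS: "t \<in> S n" unfolding S_def using lt t0 n(1) n(3) unfolding t_def by auto
  have t0': "\<forall>i<n. t ! i \<noteq> 0" unfolding t_def using n by auto
  have tS0: "t \<in> S0 n" unfolding S0_def using tS t0' by auto
  obtain i where i: "i < n" "s ! i = 1" using assms unfolding S_def by auto
  have "eliminates (map Some t) s"
    unfolding eliminates_def using lt n i
    by (auto simp: t_def intro!: bexI[where x=1] exI[where x=i])
  thus ?thesis using assms tS0 unfolding Elim_def by auto
qed

theorem mainTheorem7: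
  fixes n :: nat
  shows "S0 n \<subseteq> S n \<and> Elim n (S0 n) = S n \<and>
         (\<forall>Y. Y \<subset> S0 n \<longrightarrow> Elim n Y \<noteq> S n)"
proof (intro conjI allI impI)
  show "S0 n \<subseteq> S n" unfolding S0_def by auto
  show "Elim n (S0 n) = S n" using elim_all unfolding Elim_def by auto
  fix Y assume Y: "Y \<subset> S0 n"
  then obtain s where s: "s \<in> S0 n" "s \<notin> Y" by auto
  have sS: "s \<in> S n" and snz: "\<forall>i<n. s ! i \<noteq> 0" using s unfolding S0_def by auto
  have n: "0 < n" "length s = n" using S_pos[OF sS] by auto
  have s0: "s ! 0 = 1" using S_first[OF sS] snz n by auto
  have "s \<notin> Elim n Y"
  proof
    assume "s \<in> Elim n Y"
    then obtain t where t: "t \<in> Y" "eliminates (map Some t) s" unfolding Elim_def by auto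
    have tS0: "t \<in> S0 n" using t Y by auto
    have tS: "t \<in> S n" and tnz: "\<forall>i<n. t ! i \<noteq> 0" using tS0 unfolding S0_def by auto
    have t0: "t ! 0 = 1" using S_first[OF tS] tnz n by auto
    from t(2) obtain k where k: "k \<in> {1,-1::int}"
      "\<forall>i<length s. (map Some t) ! i \<noteq> Some 0 \<and> s ! i \<noteq> 0 \<longrightarrow> (map Some t) ! i = Some (k * s ! i)"
      and lt: "length (map Some t) = length s"
      unfolding eliminates_def by blast
    have lt': "length t = n" using lt n by simp
    have eq: "\<And>i. i < n \<Longrightarrow> t ! i = k * s ! i" using k(2) tnz snz lt' n by auto
    have "k = 1" using eq[of 0] n t0 s0 by simp
    hence "t = s" using eq lt' n by (auto intro: nth_equalityI)
    thus False using t s by simp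
  qed
  thus "Elim n Y \<noteq> S n" using sS by auto
qed

end
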